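(* Let $I,S\ge 0$ and $j$ be integers with $L(I,S)\le j\le\lfloor I/2\rfloor$, and consider the pairing process described in the context. Let $B$ be a set of $j$ bb-pairings that is the set of bb-pairings of some possible wiring. The number of possible wirings whose set of bb-pairings is exactly $B$ equals $S!$ if $(I,S,j)$ is in the dagger case, and equals the number of ordered selections (dispositions) of $I-2j$ distinct elements from a set of $S$ elements, namely $\frac{S!}{(S-I+2j)!}$, otherwise.
   Context: Pairing process: there are $I$ infected devices $b_1,\dots,b_I$ and $S$ clean devices $w_1,\dots,w_S$. For $t=1,\dots,I$ in this order: if $b_t$ is not yet paired and at least one device other than $b_t$ is not yet paired, then $b_t$ chooses one of the currently unpaired devices other than itself uniformly at random, independently of previous choices, and becomes paired with it; otherwise $b_t$ does nothing. Each device belongs to at most one pair. The wiring is the final set of pairs; a bb-pairing is a pair consisting of two infected devices; a wiring is possible if it occurs with positive probability. $L(I,S)=0$ if $I\le S$; $L(I,S)=\frac{I-S}{2}$ if $I>S$ and $I-S$ is even; $L(I,S)=\frac{I-S-1}{2}$ if $I>S$ and $I-S$ is odd. $(I,S,j)$ is in the dagger case if $I>S$, $I+S$ is odd and $j=\frac{I-S-1}{2}$. *)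

theory Defs
  imports "HOL-Probability.Probability_Mass_Function"
begin

text \<open>Devices: infected devices Inf t (b_t, 1 \<le> t \<le> I) and clean devices Cln k (w_k, 1 \<le> k \<le> S).\<close>
datatype device = Inf nat | Cln nat

definition devices :: "nat \<Rightarrow> nat \<Rightarrow> device set" where
  "devices I S = Inf ` {1..I} \<union> Cln ` {1..S}"

text \<open>A (partial) wiring is a set of pairs; a pair is a two-element set of devices.\<close>
type_synonym wiring = "device set set"

definition unpaired :: "nat \<Rightarrow> nat \<Rightarrow> wiring \<Rightarrow> device set" where
  "unpaired I S P = devices I S - \<Union>P"

definition pair_step :: "nat \<Rightarrow> nat \<Rightarrow> nat \<Rightarrow> wiring \<Rightarrow> wiring pmf" where
  "pair_step I S t P =
     (if Inf t \<in> unpaired I S P \<and> unpaired I S P - {Inf t} \<noteq> {}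
      then map_pmf (\<lambda>d. insert {Inf t, d} P) (pmf_of_set (unpaired I S P - {Inf t}))
      else return_pmf P)"

fun pairing_upto :: "nat \<Rightarrow> nat \<Rightarrow> nat \<Rightarrow> wiring pmf" where
  "pairing_upto I S 0 = return_pmf {}"
| "pairing_upto I S (Suc t) = bind_pmf (pairing_upto I S t) (pair_step I S (Suc t))"

definition pairing_process :: "nat \<Rightarrow> nat \<Rightarrow> wiring pmf" where
  "pairing_process I S = pairing_upto I S I"

definition possible_wiring :: "nat \<Rightarrow> nat \<Rightarrow> wiring \<Rightarrow> bool" where
  "possible_wiring I S W \<longleftrightarrow> pmf (pairing_process I S) W > 0"

definition is_infected :: "device \<Rightarrow> bool" where
  "is_infected d \<longleftrightarrow> (\<exists>t. d = Inf t)"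

definition bb_pairings :: "wiring \<Rightarrow> wiring" where
  "bb_pairings W = {p \<in> W. \<forall>d\<in>p. is_infected d}"

definition L :: "nat \<Rightarrow> nat \<Rightarrow> nat" where
  "L I S = (if I \<le> S then 0
            else if even (I - S) then (I - S) div 2 else (I - S - 1) div 2)"

definition dagger_case :: "nat \<Rightarrow> nat \<Rightarrow> nat \<Rightarrow> bool" where
  "dagger_case I S j \<longleftrightarrow> I > S \<and> odd (I + S) \<and> j = (I - S - 1) div 2"

end

theory Submission
  imports Defs
begin


definition ok_pair :: "nat \<Rightarrow> nat \<Rightarrow> nat \<Rightarrow> device set \<Rightarrow> bool" where
  "ok_pair I S t p \<longleftrightarrow> (\<exists>s d. p = {Inf s, d} \<and> 1 \<le> s \<and> s \<le> t \<and> d \<in> devices I S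
      \<and> d \<noteq> Inf s \<and> (\<forall>r. d = Inf r \<longrightarrow> s < r))"

definition valid :: "nat \<Rightarrow> nat \<Rightarrow> nat \<Rightarrow> wiring \<Rightarrow> bool" where
  "valid I S t P \<longleftrightarrow> (\<forall>p\<in>P. ok_pair I S t p) \<and> (\<forall>p\<in>P. \<forall>q\<in>P. p \<noteq> q \<longrightarrow> p \<inter> q = {})
     \<and> (\<forall>s\<in>{1..t}. Inf s \<in> \<Union>P \<or> (unpaired I S P = {Inf s} \<and> (\<forall>p\<in>P. ok_pair I S (s-1) p)))"

lemma finite_devices[simp]: "finite (devices I S)"
  by (simp add: devices_def)

lemma Inf_in_devices[simp]: "Inf s \<in> devices I S \<longleftrightarrow> 1 \<le> s \<and> s \<le> I"
  by (auto simp: devices_def)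

lemma Cln_in_devices[simp]: "Cln k \<in> devices I S \<longleftrightarrow> 1 \<le> k \<and> k \<le> S"
  by (auto simp: devices_def)

lemma finite_unpaired[simp]: "finite (unpaired I S P)"
  by (simp add: unpaired_def)

lemma set_pmf_pair_step:
  "set_pmf (pair_step I S t P) =
    (if Inf t \<in> unpaired I S P \<and> unpaired I S P - {Inf t} \<noteq> {}
     then (\<lambda>d. insert {Inf t, d} P) ` (unpaired I S P - {Inf t}) else {P})"
  by (simp add: pair_step_def)

lemma ok_pair_mono: "ok_pair I S t p \<Longrightarrow> t \<le> t' \<Longrightarrow> ok_pair I S t' p"
  unfolding ok_pair_def by (blast intro: order_trans)

lemma chooser_unique:
  assumes "{Inf s, d} = {Inf s', d'}" "d \<noteq> Inf s" "\<forall>r. d = Inf r \<longrightarrow> s < r"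
    "d' \<noteq> Inf s'" "\<forall>r. d' = Inf r \<longrightarrow> s' < r"
  shows "s = s' \<and> d = d'"
proof (cases "Inf s = Inf s'")
  case True
  then show ?thesis using assms(1) by (auto simp: doubleton_eq_iff)
next
  case False
  then have "Inf s = d'" "d = Inf s'" using assms(1) by (auto simp: doubleton_eq_iff)
  then show ?thesis using assms by auto
qed

lemma valid_ok: "valid I S t P \<Longrightarrow> p \<in> P \<Longrightarrow> ok_pair I S t p"
  unfolding valid_def by (elim conjE) (erule bspec)

lemma valid_disj: "valid I S t P \<Longrightarrow> p \<in> P \<Longrightarrow> q \<in> P \<Longrightarrow> p \<noteq> q \<Longrightarrow> p \<inter> q = {}"
  unfolding valid_def by (elim conjE) simp

lemma valid_cov: "valid I S t P \<Longrightarrow> s \<in> {1..t} \<Longrightarrow>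
   Inf s \<in> \<Union>P \<or> (unpaired I S P = {Inf s} \<and> (\<forall>p\<in>P. ok_pair I S (s-1) p))"
  unfolding valid_def by (elim conjE) (erule bspec)

lemma validI:
  assumes "\<And>p. p \<in> P \<Longrightarrow> ok_pair I S t p"
    and "\<And>p q. p \<in> P \<Longrightarrow> q \<in> P \<Longrightarrow> p \<noteq> q \<Longrightarrow> p \<inter> q = {}"
    and "\<And>s. s \<in> {1..t} \<Longrightarrow> Inf s \<in> \<Union>P \<or> (unpaired I S P = {Inf s} \<and> (\<forall>p\<in>P. ok_pair I S (s-1) p))"
  shows "valid I S t P"
  unfolding valid_def using assms by simp

lemma ok_pairI:
  "1 \<le> s \<Longrightarrow> s \<le> t \<Longrightarrow> d \<in> devices I S \<Longrightarrow> d \<noteq> Inf s \<Longrightarrow> (\<forall>r. d = Inf r \<longrightarrow> s < r)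
   \<Longrightarrow> ok_pair I S t {Inf s, d}"
  unfolding ok_pair_def by (rule exI[of _ s], rule exI[of _ d]) simp

lemma ok_pairE:
  assumes "ok_pair I S t p"
  obtains s d where "p = {Inf s, d}" "1 \<le> s" "s \<le> t" "d \<in> devices I S" "d \<noteq> Inf s"
    "\<forall>r. d = Inf r \<longrightarrow> s < r"
  using assms unfolding ok_pair_def by (elim exE conjE) (rule that; assumption)



lemma step_fwd:
  assumes v: "valid I S t P" and tI: "Suc t \<le> I"
    and Q: "Q \<in> set_pmf (pair_step I S (Suc t) P)"
  shows "valid I S (Suc t) Q"
proof -
  have okP: "ok_pair I S (Suc t) p" if "p \<in> P" for p
    using valid_ok[OF v that] by (rule ok_pair_mono) simp
  show ?thesis
  proof (cases "Inf (Suc t) \<in> unpaired I S P \<and> unpaired I S P - {Inf (Suc t)} \<noteq> {}")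
    case True
    then obtain d where d: "d \<in> unpaired I S P - {Inf (Suc t)}" and Qe: "Q = insert {Inf (Suc t), d} P"
      using Q by (auto simp: set_pmf_pair_step)
    have bu: "Inf (Suc t) \<in> unpaired I S P" using True by simp
    have dn: "d \<notin> \<Union>P" "d \<in> devices I S" "d \<noteq> Inf (Suc t)" using d by (auto simp: unpaired_def)
    have bn: "Inf (Suc t) \<notin> \<Union>P" using bu by (auto simp: unpaired_def)
    have A: "\<forall>r. d = Inf r \<longrightarrow> Suc t < r"
    proof (intro allI impI)
      fix r assume dr: "d = Inf r"
      show "Suc t < r"
      proof (rule ccontr)
        assume "\<not> Suc t < r"
        moreover have "r \<ge> 1" using dn(2) dr by simp
        moreover have "r \<noteq> Suc t" using dn(3) dr by auto
        ultimately have "r \<in> {1..t}" by auto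
        then have "Inf r \<in> \<Union>P \<or> unpaired I S P = {Inf r}" using valid_cov[OF v] by auto
        then show False using dn(1) dr bu \<open>r \<noteq> Suc t\<close> by auto
      qed
    qed
    have okn: "ok_pair I S (Suc t) {Inf (Suc t), d}"
      by (rule ok_pairI) (use dn A in auto)
    have np: "{Inf (Suc t), d} \<inter> p = {}" if "p \<in> P" for p
      using that dn(1) bn by auto
    show ?thesis
    proof (rule validI)
      fix p assume "p \<in> Q"
      then show "ok_pair I S (Suc t) p"
        using okn okP unfolding Qe by auto
    next
      fix p q assume pq: "p \<in> Q" "q \<in> Q" "p \<noteq> q"
      show "p \<inter> q = {}"
      proof (cases "p \<in> P \<and> q \<in> P")
        case True then show ?thesis using valid_disj[OF v] pq by simp
      next
        case False
        then have "p = {Inf (Suc t), d} \<and> q \<in> P \<or> q = {Inf (Suc t), d} \<and> p \<in> P"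
          using pq unfolding Qe by auto
        then show ?thesis using np by (auto simp: Int_commute)
      qed
    next
      fix s assume s: "s \<in> {1..Suc t}"
      show "Inf s \<in> \<Union>Q \<or> (unpaired I S Q = {Inf s} \<and> (\<forall>p\<in>Q. ok_pair I S (s - 1) p))"
      proof (cases "s = Suc t")
        case True then show ?thesis by (auto simp: Qe)
      next
        case False
        then have "s \<in> {1..t}" using s by auto
        then have "Inf s \<in> \<Union>P \<or> unpaired I S P = {Inf s}" using valid_cov[OF v] by auto
        then have "Inf s \<in> \<Union>P" using bu False by auto
        then show ?thesis by (auto simp: Qe)
      qed
    qed
  next
    case False
    then have Qe: "Q = P" using Q unfolding set_pmf_pair_step by (simp only: if_False) simp
    show ?thesis
    proof (rule validI)
      fix p assume "p \<in> Q"
      then show "ok_pair I S (Suc t) p"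
        using okP unfolding Qe by auto
    next
      fix p q assume "p \<in> Q" "q \<in> Q" "p \<noteq> q"
      then show "p \<inter> q = {}"
        using valid_disj[OF v] unfolding Qe by simp
    next
      fix s assume s: "s \<in> {1..Suc t}"
      show "Inf s \<in> \<Union>Q \<or> (unpaired I S Q = {Inf s} \<and> (\<forall>p\<in>Q. ok_pair I S (s - 1) p))"
      proof (cases "s = Suc t")
        case True
        have "Inf (Suc t) \<in> devices I S" using tI by simp
        then have "Inf (Suc t) \<in> \<Union>P \<or> unpaired I S P = {Inf (Suc t)}"
          using False by (auto simp: unpaired_def)
        moreover have okt: "\<forall>p\<in>P. ok_pair I S t p" using valid_ok[OF v] by auto
        ultimately show ?thesis unfolding Qe True by auto
      next
        case False
        then have "s \<in> {1..t}" using s by auto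
        then show ?thesis using valid_cov[OF v] unfolding Qe by simp
      qed
    qed
  qed
qed

lemma step_bwd:
  assumes v: "valid I S (Suc t) Q" and tI: "Suc t \<le> I"
  shows "\<exists>P. valid I S t P \<and> Q \<in> set_pmf (pair_step I S (Suc t) P)"
proof (cases "\<exists>d. {Inf (Suc t), d} \<in> Q \<and> d \<noteq> Inf (Suc t) \<and> (\<forall>r. d = Inf r \<longrightarrow> Suc t < r)")
  case True
  then obtain d where d: "{Inf (Suc t), d} \<in> Q" "d \<noteq> Inf (Suc t)" "\<forall>r. d = Inf r \<longrightarrow> Suc t < r"
    by blast
  define p0 where "p0 = {Inf (Suc t), d}"
  define P where "P = Q - {p0}"
  have p0Q: "p0 \<in> Q" using d p0_def by simp
  have notin: "x \<notin> \<Union>P" if "x \<in> p0" for x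
  proof
    assume "x \<in> \<Union>P"
    then obtain q where q: "q \<in> Q" "q \<noteq> p0" "x \<in> q" by (auto simp: P_def)
    then have "q \<inter> p0 = {}" using valid_disj[OF v q(1) p0Q q(2)] by simp
    then show False using q(3) that by auto
  qed
  obtain s' d' where sd': "p0 = {Inf s', d'}" "1 \<le> s'" "s' \<le> Suc t" "d' \<in> devices I S"
      "d' \<noteq> Inf s'" "\<forall>r. d' = Inf r \<longrightarrow> s' < r"
    using valid_ok[OF v p0Q] by (rule ok_pairE)
  have "Suc t = s' \<and> d = d'" by (rule chooser_unique) (use sd' d p0_def in auto)
  then have dd: "d \<in> devices I S" using sd' by simp
  have vP: "valid I S t P"
  proof (rule validI)
    fix q assume qP: "q \<in> P"
    then have qQ: "q \<in> Q" by (simp add: P_def)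
    obtain s e where se: "q = {Inf s, e}" "1 \<le> s" "s \<le> Suc t" "e \<in> devices I S"
      "e \<noteq> Inf s" "\<forall>r. e = Inf r \<longrightarrow> s < r"
      using valid_ok[OF v qQ] by (rule ok_pairE)
    have "s \<noteq> Suc t"
    proof
      assume "s = Suc t"
      then have "Inf (Suc t) \<in> \<Union>P" using se qP by auto
      then show False using notin p0_def by auto
    qed
    then show "ok_pair I S t q" using se by (auto intro!: ok_pairI)
  next
    fix p q assume "p \<in> P" "q \<in> P" "p \<noteq> q"
    then show "p \<inter> q = {}" using valid_disj[OF v] unfolding P_def by simp
  next
    fix s assume s: "s \<in> {1..t}"
    then have "Inf s \<in> \<Union>Q \<or> (unpaired I S Q = {Inf s} \<and> (\<forall>p\<in>Q. ok_pair I S (s-1) p))"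
      using valid_cov[OF v, of s] by auto
    then show "Inf s \<in> \<Union>P \<or> (unpaired I S P = {Inf s} \<and> (\<forall>p\<in>P. ok_pair I S (s-1) p))"
    proof
      assume "Inf s \<in> \<Union>Q"
      then obtain q where q: "q \<in> Q" "Inf s \<in> q" by blast
      have "q \<noteq> p0"
      proof
        assume "q = p0"
        then have "Inf s = Inf (Suc t) \<or> Inf s = d" using q p0_def by auto
        then show False using s d(3) by auto
      qed
      then show ?thesis using q by (auto simp: P_def)
    next
      assume a: "unpaired I S Q = {Inf s} \<and> (\<forall>p\<in>Q. ok_pair I S (s-1) p)"
      then have "ok_pair I S (s-1) p0" using p0Q by simp
      then obtain s2 d2 where sd2: "p0 = {Inf s2, d2}" "s2 \<le> s - 1"
          "d2 \<noteq> Inf s2" "\<forall>r. d2 = Inf r \<longrightarrow> s2 < r"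
        by (rule ok_pairE)
      have "Suc t = s2 \<and> d = d2" by (rule chooser_unique) (use sd2 d p0_def in auto)
      then show ?thesis using sd2 s by auto
    qed
  qed
  have bu: "Inf (Suc t) \<in> unpaired I S P" using tI notin[of "Inf (Suc t)"]
    by (auto simp: unpaired_def p0_def)
  have du: "d \<in> unpaired I S P - {Inf (Suc t)}" using dd notin[of d] d(2)
    by (auto simp: unpaired_def p0_def)
  have "Q = insert p0 P" using p0Q by (auto simp: P_def)
  then have "Q \<in> (\<lambda>d. insert {Inf (Suc t), d} P) ` (unpaired I S P - {Inf (Suc t)})"
    using du p0_def by blast
  then have "Q \<in> set_pmf (pair_step I S (Suc t) P)"
    using bu du unfolding set_pmf_pair_step by auto
  then show ?thesis using vP by blast
next
  case False
  have vP: "valid I S t Q"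
  proof (rule validI)
    fix q assume qQ: "q \<in> Q"
    obtain s e where se: "q = {Inf s, e}" "1 \<le> s" "s \<le> Suc t" "e \<in> devices I S"
      "e \<noteq> Inf s" "\<forall>r. e = Inf r \<longrightarrow> s < r"
      using valid_ok[OF v qQ] by (rule ok_pairE)
    have "s \<noteq> Suc t" using False se qQ by blast
    then show "ok_pair I S t q" using se by (auto intro!: ok_pairI)
  next
    fix p q assume "p \<in> Q" "q \<in> Q" "p \<noteq> q"
    then show "p \<inter> q = {}" using valid_disj[OF v] by simp
  next
    fix s assume s: "s \<in> {1..t}"
    then show "Inf s \<in> \<Union>Q \<or> (unpaired I S Q = {Inf s} \<and> (\<forall>p\<in>Q. ok_pair I S (s-1) p))"
      using valid_cov[OF v, of s] by auto
  qed
  have "Inf (Suc t) \<in> \<Union>Q \<or> unpaired I S Q = {Inf (Suc t)}" using valid_cov[OF v, of "Suc t"] by auto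
  then have nc: "\<not> (Inf (Suc t) \<in> unpaired I S Q \<and> unpaired I S Q - {Inf (Suc t)} \<noteq> {})"
    by (auto simp: unpaired_def)
  have "Q \<in> set_pmf (pair_step I S (Suc t) Q)" unfolding set_pmf_pair_step if_not_P[OF nc] by simp
  then show ?thesis using vP by blast
qed

lemma support_upto:
  "t \<le> I \<Longrightarrow> set_pmf (pairing_upto I S t) = {P. valid I S t P}"
proof (induction t)
  case 0
  have "valid I S 0 P \<longleftrightarrow> P = {}" for P
  proof
    assume "valid I S 0 P"
    then show "P = {}" using valid_ok[of I S 0 P] by (auto simp: ok_pair_def)
  next
    assume "P = {}" then show "valid I S 0 P" by (intro validI) auto
  qed
  then show ?case by auto
next
  case (Suc t)
  then have IH: "set_pmf (pairing_upto I S t) = {P. valid I S t P}" by simp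
  show ?case
  proof (intro equalityI subsetI)
    fix Q assume "Q \<in> set_pmf (pairing_upto I S (Suc t))"
    then obtain P where "P \<in> set_pmf (pairing_upto I S t)" "Q \<in> set_pmf (pair_step I S (Suc t) P)"
      by auto
    then show "Q \<in> {P. valid I S (Suc t) P}" using IH step_fwd[OF _ Suc.prems] by blast
  next
    fix Q assume "Q \<in> {P. valid I S (Suc t) P}"
    then obtain P where "valid I S t P" "Q \<in> set_pmf (pair_step I S (Suc t) P)"
      using step_bwd[OF _ Suc.prems] by blast
    then show "Q \<in> set_pmf (pairing_upto I S (Suc t))" using IH by auto
  qed
qed

lemma possible_iff: "possible_wiring I S W \<longleftrightarrow> valid I S I W"
proof -
  have "pmf (pairing_upto I S I) W > 0 \<longleftrightarrow> W \<in> set_pmf (pairing_upto I S I)"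
    using pmf_nonneg[of "pairing_upto I S I" W] by (auto simp: set_pmf_iff)
  then show ?thesis using support_upto[of I I S]
    by (simp add: possible_wiring_def pairing_process_def)
qed



definition Rset :: "nat \<Rightarrow> wiring \<Rightarrow> nat set" where
  "Rset I B = {r\<in>{1..I}. Inf r \<notin> \<Union>B}"

lemma finite_Rset[simp]: "finite (Rset I B)"
  by (simp add: Rset_def)

lemma ok_pair_clean:
  assumes "ok_pair I S t {Inf r, Cln k}"
  shows "1 \<le> r \<and> r \<le> t \<and> 1 \<le> k \<and> k \<le> S"
proof -
  obtain s d where sd: "{Inf r, Cln k} = {Inf s, d}" "1 \<le> s" "s \<le> t" "d \<in> devices I S"
    using assms by (rule ok_pairE)
  then have "s = r" "d = Cln k" by (auto simp: doubleton_eq_iff)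
  then show ?thesis using sd by auto
qed

lemma valid_clean:
  assumes "valid I S I W" "{Inf r, Cln k} \<in> W"
  shows "1 \<le> r \<and> r \<le> I \<and> 1 \<le> k \<and> k \<le> S"
  using ok_pair_clean valid_ok[OF assms] by blast

lemma clean_not_bb: "{Inf r, Cln k} \<notin> bb_pairings W"
  by (auto simp: bb_pairings_def is_infected_def)

lemma nonbb:
  assumes "valid I S I W" "p \<in> W" "p \<notin> bb_pairings W"
  shows "\<exists>s k. p = {Inf s, Cln k}"
proof -
  obtain s d where sd: "p = {Inf s, d}" "d \<noteq> Inf s"
    using valid_ok[OF assms(1,2)] by (rule ok_pairE)
  show ?thesis
  proof (cases d)
    case (Inf r)
    then have "p \<in> bb_pairings W" using sd assms(2) by (auto simp: bb_pairings_def is_infected_def)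
    then show ?thesis using assms(3) by blast
  next
    case (Cln k) then show ?thesis using sd by blast
  qed
qed

lemma clean_in_R:
  assumes "valid I S I W" "{Inf r, Cln k} \<in> W"
  shows "r \<in> Rset I (bb_pairings W)"
proof -
  have "Inf r \<notin> \<Union>(bb_pairings W)"
  proof
    assume "Inf r \<in> \<Union>(bb_pairings W)"
    then obtain q where q: "q \<in> bb_pairings W" "Inf r \<in> q" by blast
    have "q \<noteq> {Inf r, Cln k}" using q(1) clean_not_bb by metis
    moreover have "q \<in> W" using q(1) by (simp add: bb_pairings_def)
    ultimately show False using valid_disj[OF assms(1)] assms(2) q(2) by blast
  qed
  then show ?thesis using valid_clean[OF assms] by (simp add: Rset_def)
qed

lemma clean_partner:
  assumes "valid I S I W" "r \<in> Rset I (bb_pairings W)" "Inf r \<in> \<Union>W"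
  shows "\<exists>k. {Inf r, Cln k} \<in> W"
proof -
  obtain p where p: "p \<in> W" "Inf r \<in> p" using assms(3) by blast
  have "p \<notin> bb_pairings W" using assms(2) p by (auto simp: Rset_def)
  then obtain s k where "p = {Inf s, Cln k}" using nonbb[OF assms(1) p(1)] by blast
  then show ?thesis using p by auto
qed

lemma clean_unique:
  assumes "valid I S t W" "{Inf r, Cln k} \<in> W" "{Inf r, Cln k'} \<in> W"
  shows "k = k'"
  using valid_disj[OF assms] by (auto simp: doubleton_eq_iff)

lemma clean_unique2:
  assumes "valid I S t W" "{Inf r, Cln k} \<in> W" "{Inf r', Cln k} \<in> W"
  shows "r = r'"
  using valid_disj[OF assms] by (auto simp: doubleton_eq_iff)

definition hpart :: "wiring \<Rightarrow> nat \<Rightarrow> nat" where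
  "hpart W r = (SOME k. {Inf r, Cln k} \<in> W)"

lemma hpart:
  assumes "valid I S I W" "r \<in> Rset I (bb_pairings W)" "Inf r \<in> \<Union>W"
  shows "{Inf r, Cln (hpart W r)} \<in> W"
  using clean_partner[OF assms] unfolding hpart_def by (metis someI_ex)

lemma hpart_eq:
  assumes "valid I S I W" "{Inf r, Cln k} \<in> W"
  shows "hpart W r = k"
proof -
  have "{Inf r, Cln (hpart W r)} \<in> W" unfolding hpart_def using assms(2) by (metis someI_ex)
  then show ?thesis using clean_unique[OF assms(1)] assms(2) by blast
qed

lemma uncovered:
  assumes v: "valid I S I W" and R: "R = Rset I (bb_pairings W)"
    and r: "r \<in> R" "Inf r \<notin> \<Union>W"
  shows "card R = Suc S \<and> r = Max R \<and> unpaired I S W = {Inf r}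
         \<and> (\<forall>p\<in>W. ok_pair I S (r-1) p) \<and> (\<forall>r'\<in>R - {r}. Inf r' \<in> \<Union>W)"
proof -
  have rI: "r \<in> {1..I}" using r R by (simp add: Rset_def)
  have cov: "unpaired I S W = {Inf r} \<and> (\<forall>p\<in>W. ok_pair I S (r-1) p)"
    using valid_cov[OF v rI] r(2) by blast
  have oth: "\<forall>r'\<in>R - {r}. Inf r' \<in> \<Union>W"
  proof
    fix r' assume "r' \<in> R - {r}"
    then have "Inf r' \<in> devices I S" "Inf r' \<noteq> Inf r" using R by (auto simp: Rset_def)
    then show "Inf r' \<in> \<Union>W" using cov by (auto simp: unpaired_def)
  qed
  define C where "C = R - {r}"
  have inC: "{Inf x, Cln (hpart W x)} \<in> W" if "x \<in> C" for x
    using hpart[OF v] that oth R C_def by blast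
  have inj: "inj_on (hpart W) C"
  proof
    fix x y assume "x \<in> C" "y \<in> C" "hpart W x = hpart W y"
    then show "x = y" using inC clean_unique2[OF v] by metis
  qed
  have img: "hpart W ` C = {1..S}"
  proof (intro equalityI subsetI)
    fix k assume "k \<in> hpart W ` C"
    then obtain x where "x \<in> C" "k = hpart W x" by blast
    then show "k \<in> {1..S}" using inC valid_clean[OF v] by fastforce
  next
    fix k assume k: "k \<in> {1..S}"
    then have "Cln k \<in> \<Union>W" using cov by (auto simp: unpaired_def)
    then obtain p where p: "p \<in> W" "Cln k \<in> p" by blast
    have "p \<notin> bb_pairings W" using p by (auto simp: bb_pairings_def is_infected_def)
    then obtain s k' where "p = {Inf s, Cln k'}" using nonbb[OF v p(1)] by blast
    then have ps: "{Inf s, Cln k} \<in> W" using p by auto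
    have sR: "s \<in> R" using clean_in_R[OF v ps] R by simp
    have "s \<noteq> r" using ps r(2) by blast
    then have "s \<in> C" using sR C_def by simp
    moreover have "hpart W s = k" using hpart_eq[OF v ps] .
    ultimately show "k \<in> hpart W ` C" by blast
  qed
  have "card C = S" using card_image[OF inj] img by simp
  then have cR: "card R = Suc S" using r(1) C_def
    by (metis card_Suc_Diff1 finite_Rset R)
  have "\<forall>x\<in>C. x < r"
  proof
    fix x assume "x \<in> C"
    then have "ok_pair I S (r-1) {Inf x, Cln (hpart W x)}" using inC cov by simp
    then have "1 \<le> x \<and> x \<le> r - 1" by (auto dest: ok_pair_clean)
    then show "x < r" using rI by auto
  qed
  then have Mx: "r = Max R"
  proof -
    assume lt: "\<forall>x\<in>C. x < r"
    have "Max R = r"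
    proof (rule Max_eqI)
      show "finite R" using R by simp
      show "r \<in> R" using r(1) .
      fix y assume yR: "y \<in> R" show "y \<le> r"
      proof (cases "y = r")
        case False
        then have "y \<in> C" using yR C_def by simp
        then have "y < r" using lt by blast
        then show ?thesis by simp
      qed simp
    qed
    then show ?thesis by simp
  qed
  have c1: "unpaired I S W = {Inf r}" using cov by (rule conjunct1)
  have c2: "\<forall>p\<in>W. ok_pair I S (r-1) p" using cov by (rule conjunct2)
  show ?thesis using cR Mx c1 c2 oth by (intro conjI)
qed

lemma covered_card:
  assumes v: "valid I S I W" and R: "R = Rset I (bb_pairings W)"
    and all: "\<forall>r\<in>R. Inf r \<in> \<Union>W"
  shows "card R \<le> S"
proof -
  have inC: "{Inf x, Cln (hpart W x)} \<in> W" if "x \<in> R" for x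
    using hpart[OF v] that all R by blast
  have inj: "inj_on (hpart W) R"
  proof
    fix x y assume "x \<in> R" "y \<in> R" "hpart W x = hpart W y"
    then show "x = y" using inC clean_unique2[OF v] by metis
  qed
  have "hpart W ` R \<subseteq> {1..S}"
  proof
    fix k assume "k \<in> hpart W ` R"
    then obtain x where "x \<in> R" "k = hpart W x" by blast
    then show "k \<in> {1..S}" using valid_clean[OF v inC[of x]] by simp
  qed
  then have "card (hpart W ` R) \<le> card {1..S}" by (intro card_mono) simp_all
  then show ?thesis using card_image[OF inj] by simp
qed

lemma K_nondagger:
  assumes v: "valid I S I W" and R: "R = Rset I (bb_pairings W)" and D: "card R \<noteq> Suc S"
  shows "\<forall>r\<in>R. Inf r \<in> \<Union>W"
proof
  fix r assume r: "r \<in> R"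
  show "Inf r \<in> \<Union>W"
  proof (rule ccontr)
    assume "Inf r \<notin> \<Union>W"
    then have "card R = Suc S" using uncovered[OF v R r] by simp
    then show False using D by simp
  qed
qed

lemma K_dagger:
  assumes v: "valid I S I W" and R: "R = Rset I (bb_pairings W)" and D: "card R = Suc S"
  shows "Inf (Max R) \<notin> \<Union>W \<and> unpaired I S W = {Inf (Max R)}
         \<and> (\<forall>p\<in>W. ok_pair I S (Max R - 1) p) \<and> (\<forall>r'\<in>R - {Max R}. Inf r' \<in> \<Union>W)"
proof -
  have "\<exists>r\<in>R. Inf r \<notin> \<Union>W"
  proof (rule ccontr)
    assume "\<not> (\<exists>r\<in>R. Inf r \<notin> \<Union>W)"
    then have "\<forall>r\<in>R. Inf r \<in> \<Union>W" by blast
    then have "card R \<le> S" by (rule covered_card[OF v R])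
    then show False using D by simp
  qed
  then obtain r where r: "r \<in> R" "Inf r \<notin> \<Union>W" by blast
  have u: "card R = Suc S \<and> r = Max R \<and> unpaired I S W = {Inf r}
         \<and> (\<forall>p\<in>W. ok_pair I S (r-1) p) \<and> (\<forall>r'\<in>R - {r}. Inf r' \<in> \<Union>W)"
    by (rule uncovered[OF v R r])
  then have MR: "Max R = r" by simp
  show ?thesis using u r(2) unfolding MR by simp
qed



lemma card_product_dependent':
  assumes "finite S"
    and "\<forall>x \<in> S. finite (T x)"
  shows "card {(x, y). x \<in> S \<and> y \<in> T x} = (\<Sum>x \<in> S. card (T x))"
  using card_SigmaI[OF assms, symmetric]
  by (auto intro!: arg_cong[where f=card] simp add: Sigma_def)

lemma card_inj_funcset:
  assumes "finite S" "finite T" "card S \<le> card T"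
  shows "card {f \<in> extensional_funcset S T. inj_on f S} = fact (card T) div (fact (card T - card S))"
  using assms
proof (induct S arbitrary: T rule: finite_induct)
  case empty
  from this show ?case
    by (simp add: Collect_conv_if PiE_empty_domain)
next
  case (insert x S)
  have finite_delete: "finite {f : extensional_funcset S (T - {x}). inj_on f S}" for x
  proof -
    from \<open>finite T\<close> have "finite (T - {x})"
      by auto
    from \<open>finite S\<close> this have *: "finite (extensional_funcset S (T - {x}))"
      by (rule finite_PiE)
    have "{f : extensional_funcset S (T - {x}). inj_on f S} \<subseteq> (extensional_funcset S (T - {x}))"
      by auto
    with * show ?thesis
      by (auto intro: finite_subset)
  qed
  from insert have hyps: "\<forall>y \<in> T. card ({g. g \<in> extensional_funcset S (T - {y}) \<and> inj_on g S}) =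
      fact (card T - 1) div fact ((card T - 1) - card S)"(is "\<forall> _ \<in> T. _ = ?k")
    by auto
  from extensional_funcset_extend_domain_inj_on_eq[OF \<open>x \<notin> S\<close>]
  have "card {f. f \<in> extensional_funcset (insert x S) T \<and> inj_on f (insert x S)} =
      card ((\<lambda>(y, g). g(x := y)) ` {(y, g). y \<in> T \<and> g \<in> extensional_funcset S (T - {y}) \<and> inj_on g S})"
    by metis
  also from extensional_funcset_extend_domain_inj_onI[OF \<open>x \<notin> S\<close>, of T]
  have "\<dots> = card {(y, g). y \<in> T \<and> g \<in> extensional_funcset S (T - {y}) \<and> inj_on g S}"
    by (simp add: card_image)
  also have "card {(y, g). y \<in> T \<and> g \<in> extensional_funcset S (T - {y}) \<and> inj_on g S} =
      card {(y, g). y \<in> T \<and> g \<in> {f \<in> extensional_funcset S (T - {y}). inj_on f S}}"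
    by auto
  also from \<open>finite T\<close> finite_delete
  have "\<dots> = (\<Sum>y \<in> T. card {g. g \<in> extensional_funcset S (T - {y}) \<and>  inj_on g S})"
    by (subst card_product_dependent') auto
  also from hyps have "\<dots> = (card T) * ?k"
    by auto
  also have "\<dots> = card T * fact (card T - 1) div fact (card T - card (insert x S))"
    using insert unfolding div_mult1_eq[of "card T" "fact (card T - 1)"]
    by (simp add: fact_mod)
  also have "\<dots> = fact (card T) div fact (card T - card (insert x S))"
    using insert by (simp add: fact_reduce[of "card T"])
  finally show ?case .
qed

lemma bb_struct:
  assumes v: "valid I S I W" and p: "p \<in> bb_pairings W"
  shows "\<exists>s r. p = {Inf s, Inf r} \<and> s \<in> {1..I} \<and> r \<in> {1..I} \<and> s \<noteq> r"
proof -
  have pW: "p \<in> W" and inf: "\<forall>d\<in>p. is_infected d" using p by (auto simp: bb_pairings_def)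
  obtain s d where sd: "p = {Inf s, d}" "1 \<le> s" "s \<le> I" "d \<in> devices I S" "d \<noteq> Inf s"
    using valid_ok[OF v pW] by (rule ok_pairE)
  then obtain r where "d = Inf r" using inf by (auto simp: is_infected_def)
  then show ?thesis using sd by auto
qed

lemma card_R:
  assumes v: "valid I S I W"
  shows "card (Rset I (bb_pairings W)) = I - 2 * card (bb_pairings W)"
proof -
  define B where "B = bb_pairings W"
  have BW: "B \<subseteq> W" by (auto simp: B_def bb_pairings_def)
  have fW: "finite W"
  proof (rule finite_subset)
    show "W \<subseteq> Pow (devices I S)"
    proof
      fix p assume pW: "p \<in> W"
      obtain s d where "p = {Inf s, d}" "1 \<le> s" "s \<le> I" "d \<in> devices I S"
        using valid_ok[OF v pW] by (rule ok_pairE)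
      then show "p \<in> Pow (devices I S)" by auto
    qed
  qed simp
  then have fB: "finite B" using BW finite_subset by blast
  have sub: "\<Union>B \<subseteq> Inf ` {1..I}"
  proof
    fix x assume "x \<in> \<Union>B"
    then obtain p where "p \<in> B" "x \<in> p" by blast
    then show "x \<in> Inf ` {1..I}" using bb_struct[OF v, of p] B_def by auto
  qed
  have c2: "card p = 2" if "p \<in> B" for p
    using bb_struct[OF v, of p] that B_def by auto
  have "card (\<Union>B) = sum card B"
  proof (rule card_Union_disjoint)
    show "pairwise disjnt B"
    proof (rule pairwiseI)
      fix p q assume pq: "p \<in> B" "q \<in> B" "p \<noteq> q"
      show "disjnt p q" unfolding disjnt_def
        by (rule valid_disj[OF v]) (use BW pq in auto)
    qed
    fix A assume "A \<in> B" then have "card A = 2" by (rule c2)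
    then show "finite A" by (intro card_ge_0_finite) simp
  qed
  also have "\<dots> = sum (\<lambda>_. 2) B" by (rule sum.cong) (simp_all add: c2)
  also have "\<dots> = 2 * card B" by simp
  finally have cU: "card (\<Union>B) = 2 * card B" .
  have fU: "finite (\<Union>B)" by (rule finite_subset[OF sub]) simp
  have im: "Inf ` Rset I B = Inf ` {1..I} - \<Union>B" unfolding Rset_def by auto
  have ij: "inj_on Inf (Rset I B)" by (simp add: inj_on_def)
  have "card (Rset I B) = card (Inf ` {1..I} - \<Union>B)"
    using card_image[OF ij] im by simp
  also have "\<dots> = card (Inf ` {1..I}) - card (\<Union>B)" by (rule card_Diff_subset[OF fU sub])
  also have "card (Inf ` {1..I}) = I" by (simp add: card_image inj_on_def)
  finally show ?thesis using cU B_def by simp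
qed



lemma count_main:
  assumes v0: "valid I S I W0" and B: "B = bb_pairings W0"
    and R: "R = Rset I B" and R': "R' = (if card R = Suc S then R - {Max R} else R)"
  shows "card R' \<le> S \<and> card {W. valid I S I W \<and> bb_pairings W = B} = fact S div fact (S - card R')"
proof -
  define phi where "phi f = B \<union> (\<lambda>r. {Inf r, Cln (f r)}) ` R'" for f :: "nat \<Rightarrow> nat"
  define F where "F = {f \<in> extensional_funcset R' {1..S}. inj_on f R'}"
  have RI: "R \<subseteq> {1..I}" by (auto simp: R Rset_def)
  have R'R: "R' \<subseteq> R" by (auto simp: R')
  have fR': "finite R'" using R'R R finite_subset by (metis finite_Rset)
  have BW0: "B \<subseteq> W0" by (auto simp: B bb_pairings_def)
  have cleanB: "{Inf r, Cln k} \<notin> B" for r k using clean_not_bb B by metis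
  have infB: "\<not> is_infected x \<Longrightarrow> q \<in> B \<Longrightarrow> x \<notin> q" for x q by (auto simp: B bb_pairings_def)
  have RnB: "r \<in> R \<Longrightarrow> Inf r \<notin> \<Union>B" for r by (auto simp: R Rset_def)
  have nRB: "r \<in> {1..I} \<Longrightarrow> r \<notin> R \<Longrightarrow> Inf r \<in> \<Union>B" for r by (auto simp: R Rset_def)
  have Dfacts: "Max R \<in> R \<and> R' = R - {Max R} \<and> card R' = S \<and> Inf (Max R) \<notin> \<Union>W0
      \<and> unpaired I S W0 = {Inf (Max R)} \<and> (\<forall>p\<in>W0. ok_pair I S (Max R - 1) p)"
    if D: "card R = Suc S"
  proof -
    have ne: "R \<noteq> {}" using D by auto
    have fR: "finite R" using R by simp
    have M: "Max R \<in> R" using Max_in[OF fR ne] .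
    have e: "R' = R - {Max R}" using D R' by simp
    have c: "card R' = S" using e M fR D by simp
    have K: "Inf (Max R) \<notin> \<Union>W0 \<and> unpaired I S W0 = {Inf (Max R)}
         \<and> (\<forall>p\<in>W0. ok_pair I S (Max R - 1) p) \<and> (\<forall>r'\<in>R - {Max R}. Inf r' \<in> \<Union>W0)"
      using K_dagger[OF v0 _ D] R B by simp
    show ?thesis using M e c K by simp
  qed
  have cardR': "card R' \<le> S"
  proof (cases "card R = Suc S")
    case True then show ?thesis using Dfacts by simp
  next
    case False
    have "\<forall>r\<in>R. Inf r \<in> \<Union>W0" using K_nondagger[OF v0 _ False] R B by simp
    then have "card R \<le> S" using covered_card[OF v0] R B by simp
    then show ?thesis using False R' by simp
  qed
  have covW: "\<forall>r\<in>R'. Inf r \<in> \<Union>W" if vW: "valid I S I W" and bW: "bb_pairings W = B" for W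
  proof (cases "card R = Suc S")
    case True
    have "\<forall>r'\<in>R - {Max R}. Inf r' \<in> \<Union>W" using K_dagger[OF vW _ True] R bW by simp
    then show ?thesis using Dfacts[OF True] by simp
  next
    case False
    have "\<forall>r\<in>R. Inf r \<in> \<Union>W" using K_nondagger[OF vW _ False] R bW by simp
    then show ?thesis using R'R by blast
  qed
  have phi_valid: "valid I S I (phi f) \<and> bb_pairings (phi f) = B" if fF: "f \<in> F" for f
  proof -
    have fS: "r \<in> R' \<Longrightarrow> f r \<in> {1..S}" for r using fF by (auto simp: F_def PiE_def Pi_def)
    have fi: "inj_on f R'" using fF by (simp add: F_def)
    have img: "f ` R' = {1..S}" if D: "card R = Suc S"
    proof (rule card_subset_eq)
      show "f ` R' \<subseteq> {1..S}" using fS by auto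
      have c: "card R' = S" using Dfacts[OF D] by blast
      show "card (f ` R') = card {1..S}" using card_image[OF fi] c by simp
    qed simp
    have bb: "bb_pairings (phi f) = B"
    proof (intro equalityI subsetI)
      fix p assume "p \<in> bb_pairings (phi f)"
      then have p: "p \<in> phi f" "\<forall>d\<in>p. is_infected d" by (auto simp: bb_pairings_def)
      show "p \<in> B"
      proof (rule ccontr)
        assume "p \<notin> B"
        then obtain r where "p = {Inf r, Cln (f r)}" using p(1) by (auto simp: phi_def)
        then show False using p(2) by (auto simp: is_infected_def)
      qed
    next
      fix p assume pB: "p \<in> B"
      then have "\<forall>d\<in>p. is_infected d" by (auto simp: B bb_pairings_def)
      then show "p \<in> bb_pairings (phi f)" using pB by (auto simp: bb_pairings_def phi_def)
    qed
    have vv: "valid I S I (phi f)"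
    proof (rule validI)
      fix p assume "p \<in> phi f"
      then consider "p \<in> B" | r where "r \<in> R'" "p = {Inf r, Cln (f r)}" by (auto simp: phi_def)
      then show "ok_pair I S I p"
      proof cases
        case 1 then show ?thesis using valid_ok[OF v0] BW0 by blast
      next
        case (2 r)
        then have "r \<in> {1..I}" using R'R RI by blast
        then show ?thesis unfolding 2 by (intro ok_pairI) (use fS[OF 2(1)] in auto)
      qed
    next
      fix p q assume pq: "p \<in> phi f" "q \<in> phi f" "p \<noteq> q"
      have mixed: "{Inf r, Cln (f r)} \<inter> q = {}" if "r \<in> R'" "q \<in> B" for r q
      proof -
        have "Inf r \<notin> q" using RnB[of r] that R'R by blast
        moreover have "Cln (f r) \<notin> q" using infB[of "Cln (f r)" q] that by (simp add: is_infected_def)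
        ultimately show ?thesis by auto
      qed
      show "p \<inter> q = {}"
      proof (cases "p \<in> B")
        case pB: True
        show ?thesis
        proof (cases "q \<in> B")
          case True then show ?thesis using valid_disj[OF v0] BW0 pB pq(3) by blast
        next
          case False
          then obtain r where "r \<in> R'" "q = {Inf r, Cln (f r)}" using pq(2) by (auto simp: phi_def)
          then show ?thesis using mixed[of r p] pB by auto
        qed
      next
        case pnB: False
        then obtain r where r: "r \<in> R'" "p = {Inf r, Cln (f r)}" using pq(1) by (auto simp: phi_def)
        show ?thesis
        proof (cases "q \<in> B")
          case True then show ?thesis using mixed[of r q] r by auto
        next
          case False
          then obtain r' where r': "r' \<in> R'" "q = {Inf r', Cln (f r')}" using pq(2) by (auto simp: phi_def)
          have "r \<noteq> r'" using r r' pq(3) by auto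
          then have "f r \<noteq> f r'" using fi r(1) r'(1) by (meson inj_onD)
          then show ?thesis using r r' \<open>r \<noteq> r'\<close> by auto
        qed
      qed
    next
      fix s assume s: "s \<in> {1..I}"
      show "Inf s \<in> \<Union>(phi f) \<or> (unpaired I S (phi f) = {Inf s} \<and> (\<forall>p\<in>phi f. ok_pair I S (s-1) p))"
      proof (cases "s \<in> R")
        case False
        then have "Inf s \<in> \<Union>B" using nRB s by blast
        then show ?thesis by (auto simp: phi_def)
      next
        case sR: True
        show ?thesis
        proof (cases "s \<in> R'")
          case True
          then have "{Inf s, Cln (f s)} \<in> phi f" by (auto simp: phi_def)
          then show ?thesis by blast
        next
          case False
          then have D: "card R = Suc S" using sR R' by (cases "card R = Suc S") auto
          note DF = Dfacts[OF D]
          have sM: "s = Max R" using False sR DF by auto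
          have unp: "unpaired I S (phi f) = {Inf s}"
          proof (intro equalityI subsetI)
            fix x assume x: "x \<in> unpaired I S (phi f)"
            then have xd: "x \<in> devices I S" "x \<notin> \<Union>(phi f)" by (auto simp: unpaired_def)
            show "x \<in> {Inf s}"
            proof (cases x)
              case (Inf y)
              then have y: "y \<in> {1..I}" using xd by simp
              show ?thesis
              proof (cases "y \<in> R")
                case False
                then have "Inf y \<in> \<Union>B" using nRB y by blast
                then show ?thesis using xd Inf by (auto simp: phi_def)
              next
                case True
                show ?thesis
                proof (cases "y = s")
                  case True then show ?thesis using Inf by simp
                next
                  case False
                  then have "y \<in> R'" using True DF sM by simp
                  then have "{Inf y, Cln (f y)} \<in> phi f" by (auto simp: phi_def)
                  then show ?thesis using xd Inf by blast
                qed
              qed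
            next
              case (Cln k)
              then have "k \<in> {1..S}" using xd by simp
              then obtain y where "y \<in> R'" "k = f y" using img[OF D] by blast
              then have "{Inf y, Cln k} \<in> phi f" by (auto simp: phi_def)
              then show ?thesis using xd Cln by blast
            qed
          next
            fix x assume "x \<in> {Inf s}"
            then have xs: "x = Inf s" by simp
            have "Inf s \<notin> \<Union>B" using RnB sR by blast
            moreover have "Inf s \<notin> \<Union>((\<lambda>r. {Inf r, Cln (f r)}) ` R')" using False by auto
            ultimately show "x \<in> unpaired I S (phi f)" using xs s by (auto simp: unpaired_def phi_def)
          qed
          have okp: "\<forall>p\<in>phi f. ok_pair I S (s-1) p"
          proof
            fix p assume "p \<in> phi f"
            then consider "p \<in> B" | r where "r \<in> R'" "p = {Inf r, Cln (f r)}" by (auto simp: phi_def)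
            then show "ok_pair I S (s-1) p"
            proof cases
              case 1 then show ?thesis using DF BW0 sM by blast
            next
              case (2 r)
              have rR: "r \<in> R" "r \<noteq> Max R" using 2(1) DF by auto
              have "r \<le> Max R" using rR(1) R by simp
              then have "r < s" using rR sM by simp
              moreover have "r \<ge> 1" using rR(1) RI by auto
              ultimately show ?thesis unfolding 2 by (intro ok_pairI) (use fS[OF 2(1)] in auto)
            qed
          qed
          show ?thesis using unp okp by blast
        qed
      qed
    qed
    show ?thesis using vv bb by simp
  qed
  have T_eq: "{W. valid I S I W \<and> bb_pairings W = B} = phi ` F"
  proof (intro equalityI subsetI)
    fix W assume "W \<in> {W. valid I S I W \<and> bb_pairings W = B}"
    then have vW: "valid I S I W" and bW: "bb_pairings W = B" by auto
    have cv: "\<forall>r\<in>R'. Inf r \<in> \<Union>W" using covW[OF vW bW] .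
    have RW: "R = Rset I (bb_pairings W)" using R bW by simp
    have inW: "{Inf r, Cln (hpart W r)} \<in> W" if "r \<in> R'" for r
      using hpart[OF vW] that cv R'R RW by blast
    define f where "f = restrict (hpart W) R'"
    have fF: "f \<in> F"
    proof -
      have "f \<in> extensional_funcset R' {1..S}"
        unfolding f_def using inW valid_clean[OF vW] by (auto simp: PiE_def Pi_def)
      moreover have "inj_on f R'"
      proof
        fix x y assume xy: "x \<in> R'" "y \<in> R'" "f x = f y"
        then have "hpart W x = hpart W y" by (simp add: f_def)
        then show "x = y" using inW[OF xy(1)] inW[OF xy(2)] clean_unique2[OF vW] by metis
      qed
      ultimately show ?thesis by (simp add: F_def)
    qed
    have "W = phi f"
    proof (intro equalityI subsetI)
      fix p assume pW: "p \<in> W"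
      show "p \<in> phi f"
      proof (cases "p \<in> B")
        case True then show ?thesis by (simp add: phi_def)
      next
        case False
        then obtain s k where p: "p = {Inf s, Cln k}" using nonbb[OF vW pW] bW by blast
        have sR: "s \<in> R" using clean_in_R[OF vW] pW p RW by simp
        have hk: "hpart W s = k" using hpart_eq[OF vW] pW p by simp
        have "s \<in> R'"
        proof (rule ccontr)
          assume "s \<notin> R'"
          then have D: "card R = Suc S" using sR R' by (cases "card R = Suc S") auto
          then have "s = Max R" using \<open>s \<notin> R'\<close> sR Dfacts[OF D] by auto
          moreover have "Inf (Max R) \<notin> \<Union>W" using K_dagger[OF vW RW D] by simp
          ultimately show False using pW p by blast
        qed
        then show ?thesis using p hk by (auto simp: phi_def f_def)
      qed
    next
      fix p assume "p \<in> phi f"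
      then consider "p \<in> B" | r where "r \<in> R'" "p = {Inf r, Cln (f r)}" by (auto simp: phi_def)
      then show "p \<in> W"
      proof cases
        case 1 then show ?thesis using bW by (auto simp: bb_pairings_def)
      next
        case (2 r) then show ?thesis using inW by (simp add: f_def)
      qed
    qed
    then show "W \<in> phi ` F" using fF by blast
  next
    fix W assume "W \<in> phi ` F"
    then obtain f where "f \<in> F" "W = phi f" by blast
    then show "W \<in> {W. valid I S I W \<and> bb_pairings W = B}" using phi_valid by simp
  qed
  have inj: "inj_on phi F"
  proof
    fix f g assume fF: "f \<in> F" and gF: "g \<in> F" and e: "phi f = phi g"
    show "f = g"
    proof (rule extensionalityI)
      show "f \<in> extensional R'" using fF by (auto simp: F_def PiE_def)
      show "g \<in> extensional R'" using gF by (auto simp: F_def PiE_def)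
      fix x assume x: "x \<in> R'"
      then have "{Inf x, Cln (f x)} \<in> phi g" using e by (auto simp: phi_def)
      then obtain y where "y \<in> R'" "{Inf x, Cln (f x)} = {Inf y, Cln (g y)}"
        using cleanB by (auto simp: phi_def)
      then show "f x = g x" by (auto simp: doubleton_eq_iff)
    qed
  qed
  have "card {W. valid I S I W \<and> bb_pairings W = B} = card F"
    unfolding T_eq by (rule card_image[OF inj])
  also have "\<dots> = fact S div fact (S - card R')"
    unfolding F_def using card_inj_funcset[of R' "{1..S}"] fR' cardR' by simp
  finally show ?thesis using cardR' by simp
qed



lemma dag_arith:
  fixes I S j :: nat
  assumes "2 * j \<le> I"
  shows "(S < I \<and> odd (I + S) \<and> j = (I - S - 1) div 2) \<longleftrightarrow> I - 2 * j = Suc S"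
proof
  assume h: "S < I \<and> odd (I + S) \<and> j = (I - S - 1) div 2"
  have e: "I + S = (I - S) + 2 * S" using h by simp
  have "odd ((I - S) + 2 * S)" using h e by simp
  then have "odd (I - S)" by simp
  then obtain k where k: "I - S = 2 * k + 1" by (metis oddE)
  then have "j = k" using h by simp
  then show "I - 2 * j = Suc S" using k h by linarith
next
  assume h: "I - 2 * j = Suc S"
  then have I: "I = 2 * j + S + 1" using assms by linarith
  have "S < I" using I by simp
  moreover have "odd (I + S)" using I by simp
  moreover have "j = (I - S - 1) div 2" using I by simp
  ultimately show "S < I \<and> odd (I + S) \<and> j = (I - S - 1) div 2" by blast
qed

theorem lemma6:
  fixes I S j :: nat and B :: "device set set"
  assumes "L I S \<le> j" and "j \<le> I div 2"
    and "card B = j"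
    and "\<exists>W. possible_wiring I S W \<and> bb_pairings W = B"
  shows "card {W. possible_wiring I S W \<and> bb_pairings W = B} =
           (if dagger_case I S j then fact S else fact S div fact (S - (I - 2 * j)))"
proof -
  obtain W0 where w0: "possible_wiring I S W0" "bb_pairings W0 = B" using assms(4) by blast
  have v0: "valid I S I W0" using w0(1) by (simp add: possible_iff)
  define R where "R = Rset I B"
  define R' where "R' = (if card R = Suc S then R - {Max R} else R)"
  have main: "card R' \<le> S \<and> card {W. valid I S I W \<and> bb_pairings W = B} = fact S div fact (S - card R')"
    by (rule count_main[OF v0 w0(2)[symmetric] R_def R'_def])
  have seteq: "{W. possible_wiring I S W \<and> bb_pairings W = B} = {W. valid I S I W \<and> bb_pairings W = B}"
    by (simp add: possible_iff)
  have cR: "card R = I - 2 * j" using card_R[OF v0] w0(2) assms(3) R_def by simp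
  have "2 * j \<le> 2 * (I div 2)" using assms(2) by simp
  also have "\<dots> \<le> I" by simp
  finally have j2: "2 * j \<le> I" .
  have dag: "dagger_case I S j \<longleftrightarrow> card R = Suc S"
    unfolding dagger_case_def cR using dag_arith[OF j2, of S] by simp
  show ?thesis
  proof (cases "card R = Suc S")
    case True
    have ne: "R \<noteq> {}" using True by auto
    have "Max R \<in> R" by (rule Max_in) (use ne R_def in simp_all)
    then have "card R' = S" using True R'_def R_def by simp
    then show ?thesis using main seteq dag True by simp
  next
    case False
    then have "card R' = I - 2 * j" using R'_def cR by simp
    then show ?thesis using main seteq dag False by simp
  qed
qed


end
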